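(* Let $n\in\mathbb N$, let $\varphi\in\mathscr S_M(\mathbb R)$ be even and real-valued, and let $\varepsilon>0$. Then the map $T_\varepsilon:\mathscr P_n(\mathbb R)\to\mathscr P_n(\mathbb R)$, $T_\varepsilon(p)=p*\varphi_\varepsilon$, is a linear bijection (an automorphism of $\mathscr P_n(\mathbb R)$). Moreover, for $p\in\mathscr P_n(\mathbb R)$, with $p_0:=p$, $p_{j+1}:=T_\varepsilon(p_j)-p_j$ and $T_\varepsilon^0:=\mathrm{id}$: if $n$ is even, $$T_\varepsilon^{-1}(p)=\sum_{j=0}^{n/2}(-1)^jp_j=\sum_{j=0}^{n/2}\sum_{k=0}^{j}(-1)^{j+k}\binom{j}{k}T_\varepsilon^{\,j-k}(p)=\sum_{j=0}^{n/2}(-1)^{n/2-j}\binom{n/2+1}{j}T_\varepsilon^{\,n/2-j}(p);$$ if $n$ is odd, $$T_\varepsilon^{-1}(p)=\sum_{j=0}^{(n-1)/2}(-1)^jp_j=\sum_{j=0}^{(n-1)/2}(-1)^{\frac{n-1}{2}-j}\binom{\frac{n+1}{2}}{j}T_\varepsilon^{\,\frac{n-1}{2}-j}(p).$$ Here $T_\varepsilon^m$ denotes the $m$-fold composition of $T_\varepsilon$.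
   Context: $\mathscr S_M(\mathbb R)=\{f\in\mathscr S(\mathbb R): \int_{\mathbb R}f=1\}$, where $\mathscr S(\mathbb R)$ is the Schwartz space. $\varphi_\varepsilon(x):=\frac1\varepsilon\varphi(x/\varepsilon)$ for $\varepsilon>0$. $\mathscr P_n(\mathbb R)$ is the real vector space of real polynomials of degree at most $n$. Convolution: $(f*g)(x)=\int_{\mathbb R}f(x-y)g(y)\,dy$. *)

theory Defs
  imports "HOL-Analysis.Analysis" "HOL-Computational_Algebra.Polynomial"
begin

definition schwartz :: "(real \<Rightarrow> real) \<Rightarrow> bool" where
  "schwartz f \<longleftrightarrow>
     (\<forall>m x. ((deriv ^^ m) f) differentiable (at x)) \<and>
     (\<forall>k m. \<exists>C. \<forall>x. \<bar>x\<bar> ^ k * \<bar>(deriv ^^ m) f x\<bar> \<le> C)"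

definition schwartz_M :: "(real \<Rightarrow> real) \<Rightarrow> bool" where
  "schwartz_M f \<longleftrightarrow> schwartz f \<and> (f has_integral 1) UNIV"

definition rescale :: "real \<Rightarrow> (real \<Rightarrow> real) \<Rightarrow> real \<Rightarrow> real" where
  "rescale \<epsilon> \<phi> x = \<phi> (x / \<epsilon>) / \<epsilon>"

definition conv :: "(real \<Rightarrow> real) \<Rightarrow> (real \<Rightarrow> real) \<Rightarrow> real \<Rightarrow> real" where
  "conv f g = (\<lambda>x. integral UNIV (\<lambda>y. f (x - y) * g y))"

definition polys_upto :: "nat \<Rightarrow> (real \<Rightarrow> real) set" where
  "polys_upto n = {poly p | p :: real poly. degree p \<le> n}"

end

theory Submission
  imports Defs "HOL-Probability.Sinc_Integral"
begin

lemma inv_sq_integrable: "integrable lborel (\<lambda>x::real. inverse (1 + x^2))"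
  using integrable_inverse_1_plus_square by (simp add: set_integrable_def einterval_eq_UNIV)

lemma decay_integrable:
  fixes h :: "real \<Rightarrow> real"
  assumes cont: "continuous_on UNIV h" and dec: "\<And>k. \<exists>C. \<forall>y. \<bar>y\<bar>^k * \<bar>h y\<bar> \<le> C"
  shows "integrable lborel (\<lambda>y. y^i * h y)"
proof -
  obtain C0 where C0: "\<forall>y. \<bar>y\<bar>^i * \<bar>h y\<bar> \<le> C0" using dec by blast
  obtain C2 where C2: "\<forall>y. \<bar>y\<bar>^(i+2) * \<bar>h y\<bar> \<le> C2" using dec by blast
  have b: "norm (y^i * h y) \<le> norm ((C0 + C2) * inverse (1 + y^2))" for y
  proof -
    have pos: "1 + y^2 > 0" by (simp add: add_pos_nonneg)
    have "(1 + y^2) * \<bar>y^i * h y\<bar> = \<bar>y\<bar>^i * \<bar>h y\<bar> + \<bar>y\<bar>^(i+2) * \<bar>h y\<bar>"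
      by (simp add: abs_mult power_abs power_add algebra_simps power2_eq_square)
    also have "\<dots> \<le> C0 + C2" using C0 C2 by (meson add_mono)
    finally have 1: "\<bar>y^i * h y\<bar> \<le> (C0 + C2) * inverse (1 + y^2)" using pos
      by (simp add: field_simps)
    have "0 \<le> (C0 + C2) * inverse (1 + y^2)" using 1 by linarith
    then show ?thesis using 1 by simp
  qed
  have m: "(\<lambda>y. y^i * h y) \<in> borel_measurable lborel"
    by (simp add: borel_measurable_continuous_onI cont continuous_on_mult continuous_on_power continuous_on_id)
  show ?thesis
    by (rule Bochner_Integration.integrable_bound[OF integrable_mult_right[OF inv_sq_integrable] m]) (use b in auto)
qed

definition mu :: "(real \<Rightarrow> real) \<Rightarrow> nat \<Rightarrow> real" where
  "mu g i = integral\<^sup>L lborel (\<lambda>y. y^i * g y)"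

lemma poly_expand:
  fixes p :: "real poly"
  assumes "degree p \<le> m"
  shows "poly p (x - y) = (\<Sum>k\<le>m. \<Sum>i\<le>k. (coeff p k * real (k choose i) * x^(k-i) * (-1)^i) * y^i)"
proof -
  have "poly p (x - y) = poly (\<Sum>i\<le>m. monom (coeff p i) i) (x - y)"
    using poly_as_sum_of_monoms'[OF assms] by simp
  also have "\<dots> = (\<Sum>k\<le>m. coeff p k * (-y + x)^k)" by (simp add: poly_sum poly_monom)
  also have "\<dots> = (\<Sum>k\<le>m. coeff p k * (\<Sum>i\<le>k. real (k choose i) * (-y)^i * x^(k-i)))"
    by (simp only: binomial_ring)
  also have "\<dots> = (\<Sum>k\<le>m. \<Sum>i\<le>k. (coeff p k * real (k choose i) * x^(k-i) * (-1)^i) * y^i)"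
    unfolding sum_distrib_left
    apply (rule sum.cong[OF refl])
    apply (rule sum.cong[OF refl])
    apply (subst power_minus)
    apply (simp only: mult_ac)
    done
  finally show ?thesis .
qed

definition Tq :: "(real \<Rightarrow> real) \<Rightarrow> nat \<Rightarrow> real poly \<Rightarrow> real poly" where
  "Tq g m p = (\<Sum>k\<le>m. \<Sum>i\<le>k. monom (coeff p k * real (k choose i) * (-1)^i * mu g i) (k-i))"

definition Dq :: "(real \<Rightarrow> real) \<Rightarrow> nat \<Rightarrow> real poly \<Rightarrow> real poly" where
  "Dq g m p = (\<Sum>k\<le>m. \<Sum>i\<le>k. monom (coeff p k * real (k choose i) * (-1)^i *
       (if i < 2 then 0 else mu g i)) (k-i))"

lemma degree_Tq: "degree (Tq g m p) \<le> m"
  unfolding Tq_def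
  by (intro degree_sum_le finite_atMost) (meson atMost_iff degree_monom_le diff_le_self le_trans)

lemma degree_Dq: "degree (Dq g m p) \<le> m - 2"
  unfolding Dq_def
proof (intro degree_sum_le finite_atMost)
  fix k i assume k: "k \<in> {..m}" and i: "i \<in> {..k}"
  show "degree (monom (coeff p k * real (k choose i) * (-1)^i * (if i < 2 then 0 else mu g i)) (k-i)) \<le> m - 2"
  proof (cases "i < 2")
    case True then show ?thesis by simp
  next
    case False
    then have "k - i \<le> m - 2" using k i by auto
    then show ?thesis using degree_monom_le le_trans by blast
  qed
qed

lemma Dq_small: "m \<le> 1 \<Longrightarrow> Dq g m p = 0"
  unfolding Dq_def by (intro sum.neutral ballI) auto

lemma poly_sum_coeff: "degree (p::real poly) \<le> m \<Longrightarrow> poly p x = (\<Sum>k\<le>m. coeff p k * x^k)"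
proof -
  assume a: "degree p \<le> m"
  have "poly p x = poly (\<Sum>i\<le>m. monom (coeff p i) i) x"
    using poly_as_sum_of_monoms'[OF a] by simp
  also have "\<dots> = (\<Sum>k\<le>m. coeff p k * x^k)" by (simp only: poly_sum poly_monom)
  finally show ?thesis .
qed

context
  fixes g :: "real \<Rightarrow> real"
  assumes cont: "continuous_on UNIV g"
    and dec: "\<And>k. \<exists>C. \<forall>y. \<bar>y\<bar>^k * \<bar>g y\<bar> \<le> C"
begin

lemma mom_int: "integrable lborel (\<lambda>y. y^i * g y)"
  using decay_integrable[OF cont dec] .

lemma conv_poly:
  fixes p :: "real poly"
  assumes "degree p \<le> m"
  shows "integrable lborel (\<lambda>y. poly p (x - y) * g y)"
    and "integral\<^sup>L lborel (\<lambda>y. poly p (x - y) * g y) =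
          (\<Sum>k\<le>m. \<Sum>i\<le>k. coeff p k * real (k choose i) * x^(k-i) * (-1)^i * mu g i)"
proof -
  have eq: "(\<lambda>y. poly p (x - y) * g y) =
     (\<lambda>y. \<Sum>k\<le>m. \<Sum>i\<le>k. (coeff p k * real (k choose i) * x^(k-i) * (-1)^i) * (y^i * g y))"
    by (intro ext, subst poly_expand[OF assms], simp only: sum_distrib_right mult.assoc)
  show "integrable lborel (\<lambda>y. poly p (x - y) * g y)"
    unfolding eq by (intro Bochner_Integration.integrable_sum Bochner_Integration.integrable_mult_right mom_int)
  show "integral\<^sup>L lborel (\<lambda>y. poly p (x - y) * g y) =
          (\<Sum>k\<le>m. \<Sum>i\<le>k. coeff p k * real (k choose i) * x^(k-i) * (-1)^i * mu g i)"
    unfolding eq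
    by (subst Bochner_Integration.integral_sum, (intro Bochner_Integration.integrable_sum Bochner_Integration.integrable_mult_right mom_int)+,
        subst Bochner_Integration.integral_sum, (intro Bochner_Integration.integrable_sum Bochner_Integration.integrable_mult_right mom_int)+)
       (simp add: mu_def)
qed

lemma conv_lborel:
  "integrable lborel (\<lambda>y. f (x - y) * g y) \<Longrightarrow> conv f g x = integral\<^sup>L lborel (\<lambda>y. f (x - y) * g y)"
  by (simp add: conv_def integral_unique has_integral_integral_lborel)

lemma T_poly: "degree p \<le> m \<Longrightarrow> conv (poly p) g = poly (Tq g m p)"
  by (rule ext, subst conv_lborel[OF conv_poly(1)], assumption, subst conv_poly(2), assumption)
     (simp add: Tq_def poly_sum poly_monom mult_ac)

lemma D_poly:
  assumes m0: "mu g 0 = 1" and m1: "mu g 1 = 0" and d: "degree p \<le> m"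
  shows "(\<lambda>x. conv (poly p) g x - poly p x) = poly (Dq g m p)"
proof
  fix x
  have mu_split: "mu g i = (if i < 2 then 0 else mu g i) + (if i = 0 then 1 else 0)" for i
    using m0 m1 by (cases i; cases "i = 1") auto
  have "conv (poly p) g x = (\<Sum>k\<le>m. \<Sum>i\<le>k. coeff p k * real (k choose i) * x^(k-i) * (-1)^i * mu g i)"
    by (subst conv_lborel[OF conv_poly(1)[OF d]], rule conv_poly(2)[OF d])
  also have "\<dots> = (\<Sum>k\<le>m. \<Sum>i\<le>k. coeff p k * real (k choose i) * x^(k-i) * (-1)^i * (if i < 2 then 0 else mu g i))
      + (\<Sum>k\<le>m. \<Sum>i\<le>k. coeff p k * real (k choose i) * x^(k-i) * (-1)^i * (if i = 0 then 1 else 0))"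
    by (subst mu_split) (simp add: distrib_left sum.distrib)
  also have "(\<Sum>k\<le>m. \<Sum>i\<le>k. coeff p k * real (k choose i) * x^(k-i) * (-1)^i * (if i = 0 then 1 else 0)) = poly p x"
    by (simp add: poly_sum_coeff[OF d] if_distrib cong: if_cong)
  finally show "conv (poly p) g x - poly p x = poly (Dq g m p) x"
    by (simp add: Dq_def poly_sum poly_monom mult_ac)
qed

end

lemma sum_rev_atMost: "(\<Sum>i\<le>n. f (n - i)) = (\<Sum>i\<le>(n::nat). (f i :: real))"
  by (rule sum.reindex_bij_witness[of _ "\<lambda>i. n - i" "\<lambda>i. n - i"]) auto

lemma comb_step:
  fixes a :: "nat \<Rightarrow> real"
  shows "(\<Sum>k\<le>j. (-1)^k * real (j choose k) * a (Suc (j - k))) - (\<Sum>k\<le>j. (-1)^k * real (j choose k) * a (j - k))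
    = (\<Sum>k\<le>Suc j. (-1)^k * real (Suc j choose k) * a (Suc j - k))"
proof -
  have A: "(\<Sum>k\<le>j. (-1)^k * real (j choose k) * a (Suc (j - k)))
      = (\<Sum>k\<le>Suc j. (-1)^k * real (j choose k) * a (Suc j - k))"
    by (simp add: Suc_diff_le)
  also have "\<dots> = a (Suc j) + (\<Sum>k\<le>j. (-1)^Suc k * real (j choose Suc k) * a (j - k))"
    by (subst sum.atMost_Suc_shift) simp
  finally have A: "(\<Sum>k\<le>j. (-1)^k * real (j choose k) * a (Suc (j - k))) = a (Suc j) + (\<Sum>k\<le>j. (-1)^Suc k * real (j choose Suc k) * a (j - k))" .
  have B: "(\<Sum>k\<le>Suc j. (-1)^k * real (Suc j choose k) * a (Suc j - k))
     = a (Suc j) + (\<Sum>k\<le>j. (-1)^Suc k * real (j choose k) * a (j - k)) + (\<Sum>k\<le>j. (-1)^Suc k * real (j choose Suc k) * a (j - k))"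
    by (subst sum.atMost_Suc_shift) (simp add: binomial_Suc_Suc algebra_simps sum_subtractf sum_negf sum.distrib)
  show ?thesis unfolding A B by (simp add: sum_negf)
qed

lemma comb_C:
  fixes a :: "nat \<Rightarrow> real"
  shows "(\<Sum>j\<le>N. \<Sum>k\<le>j. (-1)^(j+k) * real (j choose k) * a (j - k))
       = (\<Sum>j\<le>N. (-1)^(N-j) * real (Suc N choose j) * a (N - j))"
proof -
  have "(\<Sum>j\<le>N. \<Sum>k\<le>j. (-1)^(j+k) * real (j choose k) * a (j - k))
      = (\<Sum>j\<le>N. \<Sum>m\<le>j. (-1)^m * real (j choose m) * a m)"
  proof (rule sum.cong[OF refl])
    fix j assume "j \<in> {..N}"
    have "(\<Sum>k\<le>j. (-1)^(j+k) * real (j choose k) * a (j - k)) = (\<Sum>k\<le>j. (-1)^(j-k) * real (j choose (j - k)) * a (j - k))"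
    proof (rule sum.cong[OF refl])
      fix k assume "k \<in> {..j}"
      then have k: "k \<le> j" by simp
      obtain d where d: "j = k + d" using le_Suc_ex[OF k] by blast
      have pw: "(-1::real)^(k + d + k) = (-1)^d" for d by (induct k) auto
      have "(-1::real)^(j+k) = (-1)^(j-k)" unfolding d using pw by simp
      then show "(-1)^(j+k) * real (j choose k) * a (j - k) = (-1)^(j-k) * real (j choose (j - k)) * a (j - k)"
        using binomial_symmetric[OF k] by simp
    qed
    also have "\<dots> = (\<Sum>m\<le>j. (-1)^m * real (j choose m) * a m)"
      by (rule sum_rev_atMost[where f = "\<lambda>m. (-1)^m * real (j choose m) * a m"])
    finally show "(\<Sum>k\<le>j. (-1)^(j+k) * real (j choose k) * a (j - k)) = (\<Sum>m\<le>j. (-1)^m * real (j choose m) * a m)" .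
  qed
  also have "\<dots> = (\<Sum>j\<le>N. \<Sum>m\<le>N. (-1)^m * real (j choose m) * a m)"
  proof (rule sum.cong[OF refl])
    fix j assume "j \<in> {..N}"
    then have e: "{..N} = {..j} \<union> {j<..N}" by auto
    have z: "(\<Sum>m\<in>{j<..N}. (-1)^m * real (j choose m) * a m) = 0" by (intro sum.neutral) auto
    have "(\<Sum>m\<le>N. (-1)^m * real (j choose m) * a m) = (\<Sum>m\<in>{..j}. (-1)^m * real (j choose m) * a m) + (\<Sum>m\<in>{j<..N}. (-1)^m * real (j choose m) * a m)"
      unfolding e by (rule sum.union_disjoint) auto
    then show "(\<Sum>m\<le>j. (-1)^m * real (j choose m) * a m) = (\<Sum>m\<le>N. (-1)^m * real (j choose m) * a m)"
      using z by simp
  qed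
  also have "\<dots> = (\<Sum>m\<le>N. (-1)^m * a m * real (\<Sum>j\<le>N. j choose m))"
    by (subst sum.swap) (simp add: sum_distrib_left mult_ac)
  also have "\<dots> = (\<Sum>m\<le>N. (-1)^m * real (Suc N choose Suc m) * a m)"
    by (simp add: sum_choose_upper mult_ac)
  also have "\<dots> = (\<Sum>m\<le>N. (-1)^(N - (N - m)) * real (Suc N choose (N - m)) * a (N - (N - m)))"
  proof (rule sum.cong[OF refl])
    fix m assume "m \<in> {..N}"
    then have m: "m \<le> N" by simp
    have "Suc N choose (N - m) = Suc N choose (Suc N - (N - m))" by (rule binomial_symmetric) simp
    also have "Suc N - (N - m) = Suc m" using m by simp
    finally show "(-1)^m * real (Suc N choose Suc m) * a m = (-1)^(N - (N - m)) * real (Suc N choose (N - m)) * a (N - (N - m))"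
      using m by simp
  qed
  also have "\<dots> = (\<Sum>j\<le>N. (-1)^(N-j) * real (Suc N choose j) * a (N - j))"
    by (rule sum_rev_atMost[where f = "\<lambda>j. (-1)^(N-j) * real (Suc N choose j) * a (N - j)"])
  finally show ?thesis .
qed

lemma polys_uptoE: "f \<in> polys_upto m \<Longrightarrow> \<exists>p. f = poly p \<and> degree p \<le> m"
  by (auto simp: polys_upto_def)

lemma polys_upto_mono: "m \<le> n \<Longrightarrow> polys_upto m \<subseteq> polys_upto n"
  by (auto simp: polys_upto_def)

lemma polys_upto_zero: "(\<lambda>x. 0) \<in> polys_upto m"
  unfolding polys_upto_def by (rule CollectI, rule exI[of _ 0]) (simp add: fun_eq_iff)

lemma polys_upto_lin:
  assumes "f \<in> polys_upto m" "h \<in> polys_upto m"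
  shows "(\<lambda>x. a * f x + b * h x) \<in> polys_upto m"
proof -
  obtain p q where p: "f = poly p" "degree p \<le> m" and q: "h = poly q" "degree q \<le> m"
    using assms polys_uptoE by blast
  have "degree (smult a p + smult b q) \<le> m"
    by (meson degree_add_le degree_smult_le le_trans p(2) q(2))
  moreover have "(\<lambda>x. a * f x + b * h x) = poly (smult a p + smult b q)"
    using p q by (simp add: fun_eq_iff)
  ultimately show ?thesis unfolding polys_upto_def by blast
qed

lemma polys_upto_sum:
  assumes "finite I" "\<And>i. i \<in> I \<Longrightarrow> f i \<in> polys_upto m"
  shows "(\<lambda>x. \<Sum>i\<in>I. c i * f i x) \<in> polys_upto m"
  using assms
proof (induction I rule: finite_induct)
  case empty then show ?case using polys_upto_zero by simp
next
  case (insert i I)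
  have "(\<lambda>x. c i * f i x + 1 * (\<Sum>i\<in>I. c i * f i x)) \<in> polys_upto m"
    using insert by (intro polys_upto_lin) auto
  then show ?case using insert by simp
qed

context
  fixes g :: "real \<Rightarrow> real"
  assumes cont: "continuous_on UNIV g"
    and dec: "\<And>k. \<exists>C. \<forall>y. \<bar>y\<bar>^k * \<bar>g y\<bar> \<le> C"
begin

lemma int_polys: "f \<in> polys_upto m \<Longrightarrow> integrable lborel (\<lambda>y. f (x - y) * g y)"
  using conv_poly(1)[OF cont dec] polys_uptoE by blast

lemma T_polys: "f \<in> polys_upto m \<Longrightarrow> conv f g \<in> polys_upto m"
  using T_poly[OF cont dec] degree_Tq polys_uptoE unfolding polys_upto_def by blast

lemma D_polys:
  assumes "mu g 0 = 1" "mu g 1 = 0" "f \<in> polys_upto m"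
  shows "(\<lambda>x. conv f g x - f x) \<in> polys_upto (m - 2)"
  using D_poly[OF cont dec assms(1,2)] degree_Dq polys_uptoE[OF assms(3)] unfolding polys_upto_def by blast

lemma D_small:
  assumes "mu g 0 = 1" "mu g 1 = 0" "f \<in> polys_upto m" "m \<le> 1"
  shows "(\<lambda>x. conv f g x - f x) = (\<lambda>x. 0)"
proof -
  obtain p where p: "f = poly p" "degree p \<le> m" using polys_uptoE[OF assms(3)] by blast
  have "(\<lambda>x. conv f g x - f x) = poly (Dq g m p)" using D_poly[OF cont dec assms(1,2) p(2)] p(1) by simp
  then show ?thesis using Dq_small[OF assms(4)] by (simp add: fun_eq_iff)
qed

lemma T_lin:
  assumes "f \<in> polys_upto m" "h \<in> polys_upto m"
  shows "conv (\<lambda>x. a * f x + b * h x) g = (\<lambda>x. a * conv f g x + b * conv h g x)"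
proof
  fix x
  have i1: "integrable lborel (\<lambda>y. f (x - y) * g y)" using int_polys assms by blast
  have i2: "integrable lborel (\<lambda>y. h (x - y) * g y)" using int_polys assms by blast
  have e: "(\<lambda>y. (a * f (x - y) + b * h (x - y)) * g y) = (\<lambda>y. a * (f (x - y) * g y) + b * (h (x - y) * g y))"
    by (simp add: fun_eq_iff algebra_simps)
  have i3: "integrable lborel (\<lambda>y. (a * f (x - y) + b * h (x - y)) * g y)"
    unfolding e using i1 i2 by simp
  show "conv (\<lambda>x. a * f x + b * h x) g x = a * conv f g x + b * conv h g x"
    using conv_lborel[OF cont dec i3] conv_lborel[OF cont dec i1] conv_lborel[OF cont dec i2] i1 i2 unfolding e
    by simp
qed

lemma T_sum:
  assumes "finite I" "\<And>i. i \<in> I \<Longrightarrow> f i \<in> polys_upto m"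
  shows "conv (\<lambda>x. \<Sum>i\<in>I. c i * f i x) g = (\<lambda>x. \<Sum>i\<in>I. c i * conv (f i) g x)"
proof
  fix x
  have i1: "i \<in> I \<Longrightarrow> integrable lborel (\<lambda>y. f i (x - y) * g y)" for i using int_polys assms by blast
  have e: "(\<lambda>y. (\<Sum>i\<in>I. c i * f i (x - y)) * g y) = (\<lambda>y. \<Sum>i\<in>I. c i * (f i (x - y) * g y))"
    by (rule ext) (simp add: sum_distrib_right mult.assoc)
  have i3: "integrable lborel (\<lambda>y. (\<Sum>i\<in>I. c i * f i (x - y)) * g y)"
    unfolding e using i1 by (intro Bochner_Integration.integrable_sum Bochner_Integration.integrable_mult_right) auto
  have "conv (\<lambda>x. \<Sum>i\<in>I. c i * f i x) g x = (\<Sum>i\<in>I. c i * integral\<^sup>L lborel (\<lambda>y. f i (x - y) * g y))"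
    using conv_lborel[OF cont dec i3] unfolding e
    by (subst (asm) Bochner_Integration.integral_sum) (use i1 in auto)
  also have "\<dots> = (\<Sum>i\<in>I. c i * conv (f i) g x)"
    using conv_lborel[OF cont dec i1] by simp
  finally show "conv (\<lambda>x. \<Sum>i\<in>I. c i * f i x) g x = (\<Sum>i\<in>I. c i * conv (f i) g x)" .
qed

end

lemma schwartz_cont: assumes "schwartz \<phi>" shows "continuous_on UNIV \<phi>"
proof -
  have "\<phi> differentiable (at x)" for x using assms unfolding schwartz_def by (metis funpow_0)
  then show ?thesis by (simp add: continuous_at_imp_continuous_on differentiable_imp_continuous_within)
qed

lemma schwartz_dec: assumes "schwartz \<phi>" shows "\<exists>C. \<forall>y. \<bar>y\<bar>^k * \<bar>\<phi> y\<bar> \<le> C"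
  using assms unfolding schwartz_def by (metis funpow_0)

lemma rescale_cont:
  assumes "\<epsilon> > 0" "continuous_on UNIV \<phi>" shows "continuous_on UNIV (rescale \<epsilon> \<phi>)"
proof -
  have "continuous_on UNIV (\<lambda>x. \<phi> (x / \<epsilon>))"
    by (rule continuous_on_compose2[OF assms(2)]) (use assms(1) in \<open>auto intro!: continuous_intros\<close>)
  moreover have "\<epsilon> \<noteq> 0" using assms(1) by simp
  ultimately show ?thesis unfolding rescale_def by (auto intro!: continuous_intros)
qed

lemma rescale_dec:
  assumes "\<epsilon> > 0" "\<And>k. \<exists>C. \<forall>y. \<bar>y\<bar>^k * \<bar>\<phi> y\<bar> \<le> C"
  shows "\<exists>C. \<forall>y. \<bar>y\<bar>^k * \<bar>rescale \<epsilon> \<phi> y\<bar> \<le> C"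
proof -
  obtain C where C: "\<forall>y. \<bar>y\<bar>^k * \<bar>\<phi> y\<bar> \<le> C" using assms(2) by blast
  show ?thesis
  proof (intro exI allI)
    fix y
    have e: "\<bar>y\<bar>^k = \<epsilon>^k * \<bar>y / \<epsilon>\<bar>^k" using assms(1) by (simp add: power_divide)
    have "\<bar>y\<bar>^k * \<bar>rescale \<epsilon> \<phi> y\<bar> = \<epsilon>^k / \<epsilon> * (\<bar>y / \<epsilon>\<bar>^k * \<bar>\<phi> (y / \<epsilon>)\<bar>)"
      unfolding rescale_def e using assms(1) by (simp add: abs_divide)
    also have "\<dots> \<le> \<epsilon>^k / \<epsilon> * C"
    proof (rule mult_left_mono)
      show "\<bar>y / \<epsilon>\<bar>^k * \<bar>\<phi> (y / \<epsilon>)\<bar> \<le> C" using C by blast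
      show "0 \<le> \<epsilon>^k / \<epsilon>" using assms(1) by simp
    qed
    finally show "\<bar>y\<bar>^k * \<bar>rescale \<epsilon> \<phi> y\<bar> \<le> \<epsilon>^k / \<epsilon> * C" .
  qed
qed

lemma rescale_mu0:
  assumes "schwartz_M \<phi>" "\<epsilon> > 0"
  shows "mu (rescale \<epsilon> \<phi>) 0 = 1"
proof -
  have s: "schwartz \<phi>" and h: "(\<phi> has_integral 1) UNIV" using assms(1) by (auto simp: schwartz_M_def)
  have "integrable lborel (\<lambda>y. y^0 * \<phi> y)"
    by (rule decay_integrable[OF schwartz_cont[OF s] schwartz_dec[OF s]])
  then have int: "integrable lborel \<phi>" by simp
  have i1: "integral\<^sup>L lborel \<phi> = 1"
    using has_integral_unique[OF has_integral_integral_lborel[OF int] h] .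
  have "integral\<^sup>L lborel \<phi> = \<bar>1/\<epsilon>\<bar> *\<^sub>R integral\<^sup>L lborel (\<lambda>x. \<phi> (0 + 1/\<epsilon> * x))"
    by (rule lborel_integral_real_affine) (use assms(2) in simp)
  then have "1 = integral\<^sup>L lborel (\<lambda>x. \<phi> (x / \<epsilon>)) / \<epsilon>"
    using assms(2) i1 by simp
  then show ?thesis unfolding mu_def rescale_def by simp
qed

lemma rescale_mu1:
  assumes "\<forall>x. \<phi> (- x) = \<phi> x"
  shows "mu (rescale \<epsilon> \<phi>) 1 = 0"
proof -
  let ?g = "rescale \<epsilon> \<phi>"
  have ev: "?g (- x) = ?g x" for x using assms unfolding rescale_def by (metis minus_divide_left)
  have "integral\<^sup>L lborel (\<lambda>y. y * ?g y) = \<bar>-1\<bar> *\<^sub>R integral\<^sup>L lborel (\<lambda>x. (0 + -1 * x) * ?g (0 + -1 * x))"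
    by (rule lborel_integral_real_affine) simp
  also have "\<dots> = - integral\<^sup>L lborel (\<lambda>y. y * ?g y)"
    using ev by simp
  finally show ?thesis unfolding mu_def by simp
qed

theorem mainTheorem5:
  fixes n :: nat and \<phi> :: "real \<Rightarrow> real" and \<epsilon> :: real
  assumes "schwartz_M \<phi>"
    and "\<forall>x. \<phi> (- x) = \<phi> x"
    and "\<epsilon> > 0"
  defines "T \<equiv> (\<lambda>f. conv f (rescale \<epsilon> \<phi>))"
  shows "(\<forall>p\<in>polys_upto n. \<forall>q\<in>polys_upto n. \<forall>a b :: real.
            T (\<lambda>x. a * p x + b * q x) = (\<lambda>x. a * T p x + b * T q x))
    \<and> bij_betw T (polys_upto n) (polys_upto n)
    \<and> (\<forall>p\<in>polys_upto n.
         let Tinv = the_inv_into (polys_upto n) T;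
             pj = (\<lambda>j. ((\<lambda>f. (\<lambda>x. T f x - f x)) ^^ j) p)
         in (even n \<longrightarrow>
               Tinv p = (\<lambda>x. \<Sum>j\<le>n div 2. (-1) ^ j * pj j x)
             \<and> (\<lambda>x. \<Sum>j\<le>n div 2. (-1) ^ j * pj j x)
                 = (\<lambda>x. \<Sum>j\<le>n div 2. \<Sum>k\<le>j.
                        (-1) ^ (j + k) * real (j choose k) * (T ^^ (j - k)) p x)
             \<and> (\<lambda>x. \<Sum>j\<le>n div 2. \<Sum>k\<le>j.
                        (-1) ^ (j + k) * real (j choose k) * (T ^^ (j - k)) p x)
                 = (\<lambda>x. \<Sum>j\<le>n div 2.
                        (-1) ^ (n div 2 - j) * real ((n div 2 + 1) choose j)
                          * (T ^^ (n div 2 - j)) p x))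
          \<and> (odd n \<longrightarrow>
               Tinv p = (\<lambda>x. \<Sum>j\<le>(n - 1) div 2. (-1) ^ j * pj j x)
             \<and> (\<lambda>x. \<Sum>j\<le>(n - 1) div 2. (-1) ^ j * pj j x)
                 = (\<lambda>x. \<Sum>j\<le>(n - 1) div 2.
                        (-1) ^ ((n - 1) div 2 - j) * real ((n + 1) div 2 choose j)
                          * (T ^^ ((n - 1) div 2 - j)) p x)))"
proof -
  define g where "g = rescale \<epsilon> \<phi>"
  have s: "schwartz \<phi>" using assms(1) by (simp add: schwartz_M_def)
  have gc: "continuous_on UNIV g" unfolding g_def by (rule rescale_cont[OF assms(3) schwartz_cont[OF s]])
  have gd: "\<And>k. \<exists>C. \<forall>y. \<bar>y\<bar>^k * \<bar>g y\<bar> \<le> C" unfolding g_def by (rule rescale_dec[OF assms(3) schwartz_dec[OF s]])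
  have m0: "mu g 0 = 1" unfolding g_def by (rule rescale_mu0[OF assms(1,3)])
  have m1: "mu g 1 = 0" unfolding g_def by (rule rescale_mu1[OF assms(2)])
  have Tg: "T = (\<lambda>f. conv f g)" unfolding T_def g_def ..
  define D where "D = (\<lambda>f. (\<lambda>x. T f x - f x))"
  have Deq: "(\<lambda>f. (\<lambda>x. T f x - f x)) = D" by (simp add: D_def)
  have TP: "f \<in> polys_upto m \<Longrightarrow> T f \<in> polys_upto m" for f m unfolding Tg by (rule T_polys[OF gc gd])
  have DP: "f \<in> polys_upto m \<Longrightarrow> D f \<in> polys_upto (m - 2)" for f m
    unfolding D_def Tg by (rule D_polys[OF gc gd m0 m1])
  have DS: "f \<in> polys_upto m \<Longrightarrow> m \<le> 1 \<Longrightarrow> D f = (\<lambda>x. 0)" for f m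
    unfolding D_def Tg by (rule D_small[OF gc gd m0 m1])
  have Tlin: "f \<in> polys_upto m \<Longrightarrow> h \<in> polys_upto m \<Longrightarrow>
      T (\<lambda>x. a * f x + b * h x) = (\<lambda>x. a * T f x + b * T h x)" for f h m a b
    unfolding Tg by (rule T_lin[OF gc gd])
  have Tsum: "finite I \<Longrightarrow> (\<And>i. i \<in> I \<Longrightarrow> f i \<in> polys_upto n) \<Longrightarrow>
      T (\<lambda>x. \<Sum>i\<in>I. c i * f i x) = (\<lambda>x. \<Sum>i\<in>I. c i * T (f i) x)" for I f c
    unfolding Tg by (rule T_sum[OF gc gd])
  have Dj: "p \<in> polys_upto n \<Longrightarrow> (D^^j) p \<in> polys_upto (n - 2*j)" for p j
  proof (induction j)
    case 0 then show ?case by simp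
  next
    case (Suc j)
    then have "D ((D^^j) p) \<in> polys_upto (n - 2*j - 2)" using DP by blast
    moreover have "n - 2 * Suc j = n - 2*j - 2" by simp
    ultimately show ?case by simp
  qed
  have DjP: "p \<in> polys_upto n \<Longrightarrow> (D^^j) p \<in> polys_upto n" for p j
    using Dj polys_upto_mono[of "n - 2*j" n] by auto
  have DN: "p \<in> polys_upto n \<Longrightarrow> (D^^Suc (n div 2)) p = (\<lambda>x. 0)" for p
  proof -
    assume p: "p \<in> polys_upto n"
    have "(D^^Suc (n div 2)) p = D ((D^^(n div 2)) p)" by simp
    also have "\<dots> = (\<lambda>x. 0)" by (rule DS[OF Dj[OF p]]) simp
    finally show ?thesis .
  qed
  have TjP: "p \<in> polys_upto n \<Longrightarrow> (T^^j) p \<in> polys_upto n" for p j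
    by (induction j) (auto intro: TP)
  have Bcore: "p \<in> polys_upto n \<Longrightarrow>
      (D^^j) p = (\<lambda>x. \<Sum>k\<le>j. (-1)^k * real (j choose k) * (T^^(j-k)) p x)" for p j
  proof (induction j)
    case 0 then show ?case by simp
  next
    case (Suc j)
    have TD: "T ((D^^j) p) = (\<lambda>x. \<Sum>k\<le>j. (-1)^k * real (j choose k) * (T^^(Suc (j-k))) p x)"
    proof -
      have "T (\<lambda>x. \<Sum>k\<in>{..j}. (\<lambda>k. (-1)^k * real (j choose k)) k * (\<lambda>k. (T^^(j-k)) p) k x)
          = (\<lambda>x. \<Sum>k\<in>{..j}. (\<lambda>k. (-1)^k * real (j choose k)) k * T ((\<lambda>k. (T^^(j-k)) p) k) x)"
        by (rule Tsum) (use TjP Suc.prems in auto)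
      then show ?thesis unfolding Suc.IH[OF Suc.prems] by simp
    qed
    show ?case
    proof
      fix x
      have "(D^^Suc j) p x = T ((D^^j) p) x - (D^^j) p x" by (simp add: D_def)
      also have "\<dots> = (\<Sum>k\<le>j. (-1)^k * real (j choose k) * (T^^(Suc (j-k))) p x)
          - (\<Sum>k\<le>j. (-1)^k * real (j choose k) * (T^^(j-k)) p x)"
        unfolding TD by (subst Suc.IH[OF Suc.prems]) simp
      also have "\<dots> = (\<Sum>k\<le>Suc j. (-1)^k * real (Suc j choose k) * (T^^(Suc j - k)) p x)"
        by (rule comb_step[where a = "\<lambda>m. (T^^m) p x"])
      finally show "(D^^Suc j) p x = (\<Sum>k\<le>Suc j. (-1)^k * real (Suc j choose k) * (T^^(Suc j - k)) p x)" .
    qed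
  qed
  define S where "S = (\<lambda>p. (\<lambda>x. \<Sum>j\<le>n div 2. (-1)^j * (D^^j) p x))"
  have SP: "p \<in> polys_upto n \<Longrightarrow> S p \<in> polys_upto n" for p
    unfolding S_def by (rule polys_upto_sum) (use DjP in auto)
  have TS: "p \<in> polys_upto n \<Longrightarrow> T (S p) = p" for p
  proof -
    assume p: "p \<in> polys_upto n"
    have "T (S p) = (\<lambda>x. \<Sum>j\<in>{..n div 2}. (\<lambda>j. (-1)^j) j * T ((\<lambda>j. (D^^j) p) j) x)"
      unfolding S_def by (rule Tsum) (use DjP p in auto)
    also have "\<dots> = p"
    proof
      fix x
      let ?e = "\<lambda>j. (-1)^j * (D^^j) p x"
      have "(\<Sum>j\<in>{..n div 2}. (\<lambda>j. (-1)^j) j * T ((\<lambda>j. (D^^j) p) j) x)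
          = (\<Sum>j\<le>n div 2. ?e j - ?e (Suc j))"
        by (intro sum.cong refl) (simp add: D_def algebra_simps)
      also have "\<dots> = ?e 0 - ?e (Suc (n div 2))" by (rule sum_telescope)
      also have "\<dots> = p x" using DN[OF p] by simp
      finally show "(\<Sum>j\<in>{..n div 2}. (\<lambda>j. (-1)^j) j * T ((\<lambda>j. (D^^j) p) j) x) = p x" .
    qed
    finally show ?thesis .
  qed
  have inj: "inj_on T (polys_upto n)"
  proof (rule inj_onI)
    fix f h assume f: "f \<in> polys_upto n" and h: "h \<in> polys_upto n" and eq: "T f = T h"
    define d where "d = (\<lambda>x. 1 * f x + (-1) * h x)"
    have dP: "d \<in> polys_upto n" unfolding d_def using f h by (rule polys_upto_lin)
    have Td: "T d = (\<lambda>x. 0)" unfolding d_def Tlin[OF f h] eq by simp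
    have Tsc: "T (\<lambda>x. c * d x) = (\<lambda>x. 0)" for c
    proof -
      have "T (\<lambda>x. c * d x + 0 * d x) = (\<lambda>x. c * T d x + 0 * T d x)" by (rule Tlin[OF dP dP])
      then show ?thesis using Td by simp
    qed
    have Dd: "(D^^j) d = (\<lambda>x. (-1)^j * d x)" for j
    proof (induction j)
      case 0 then show ?case by simp
    next
      case (Suc j)
      have "(D^^Suc j) d = D ((D^^j) d)" by simp
      also have "\<dots> = D (\<lambda>x. (-1)^j * d x)" using Suc.IH by simp
      also have "\<dots> = (\<lambda>x. (-1)^Suc j * d x)" unfolding D_def using Tsc by simp
      finally show ?case .
    qed
    have "(\<lambda>x. (-1)^(Suc (n div 2)) * d x) = (\<lambda>x. 0::real)" using DN[OF dP] Dd by metis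
    then have "d x = 0" for x by (metis mult_eq_0_iff power_eq_0_iff neg_one_neq_zero)
    then show "f = h" unfolding d_def by (simp add: fun_eq_iff)
  qed
  have bij: "bij_betw T (polys_upto n) (polys_upto n)"
    unfolding bij_betw_def
  proof (intro conjI inj equalityI subsetI)
    fix y assume "y \<in> T ` polys_upto n" then show "y \<in> polys_upto n" using TP by auto
  next
    fix p assume p: "p \<in> polys_upto n"
    then have "T (S p) \<in> T ` polys_upto n" using SP by blast
    then show "p \<in> T ` polys_upto n" using TS[OF p] by simp
  qed
  have lin: "\<forall>p\<in>polys_upto n. \<forall>q\<in>polys_upto n. \<forall>a b :: real.
            T (\<lambda>x. a * p x + b * q x) = (\<lambda>x. a * T p x + b * T q x)"
    using Tlin by blast
  have inv: "the_inv_into (polys_upto n) T p = S p" if p: "p \<in> polys_upto n" for p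
    using the_inv_into_f_f[OF inj SP[OF p]] TS[OF p] by simp
  have eB: "S p = (\<lambda>x. \<Sum>j\<le>n div 2. \<Sum>k\<le>j. (-1) ^ (j + k) * real (j choose k) * (T ^^ (j - k)) p x)"
    if p: "p \<in> polys_upto n" for p
  proof
    fix x
    show "S p x = (\<Sum>j\<le>n div 2. \<Sum>k\<le>j. (-1) ^ (j + k) * real (j choose k) * (T ^^ (j - k)) p x)"
      unfolding S_def
    proof (rule sum.cong[OF refl])
      fix j assume "j \<in> {..n div 2}"
      show "(-1)^j * (D^^j) p x = (\<Sum>k\<le>j. (-1) ^ (j + k) * real (j choose k) * (T ^^ (j - k)) p x)"
        by (subst Bcore[OF p]) (simp add: sum_distrib_left power_add mult_ac)
    qed
  qed
  have eC: "(\<lambda>x. \<Sum>j\<le>n div 2. \<Sum>k\<le>j. (-1) ^ (j + k) * real (j choose k) * (T ^^ (j - k)) p x)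
      = (\<lambda>x. \<Sum>j\<le>n div 2. (-1) ^ (n div 2 - j) * real ((n div 2 + 1) choose j) * (T ^^ (n div 2 - j)) p x)" for p
    using comb_C[where a = "\<lambda>m. (T^^m) p x" and N = "n div 2" for x] by simp
  have main: "\<forall>p\<in>polys_upto n.
         let Tinv = the_inv_into (polys_upto n) T;
             pj = (\<lambda>j. ((\<lambda>f. (\<lambda>x. T f x - f x)) ^^ j) p)
         in (even n \<longrightarrow>
               Tinv p = (\<lambda>x. \<Sum>j\<le>n div 2. (-1) ^ j * pj j x)
             \<and> (\<lambda>x. \<Sum>j\<le>n div 2. (-1) ^ j * pj j x)
                 = (\<lambda>x. \<Sum>j\<le>n div 2. \<Sum>k\<le>j.
                        (-1) ^ (j + k) * real (j choose k) * (T ^^ (j - k)) p x)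
             \<and> (\<lambda>x. \<Sum>j\<le>n div 2. \<Sum>k\<le>j.
                        (-1) ^ (j + k) * real (j choose k) * (T ^^ (j - k)) p x)
                 = (\<lambda>x. \<Sum>j\<le>n div 2.
                        (-1) ^ (n div 2 - j) * real ((n div 2 + 1) choose j)
                          * (T ^^ (n div 2 - j)) p x))
          \<and> (odd n \<longrightarrow>
               Tinv p = (\<lambda>x. \<Sum>j\<le>(n - 1) div 2. (-1) ^ j * pj j x)
             \<and> (\<lambda>x. \<Sum>j\<le>(n - 1) div 2. (-1) ^ j * pj j x)
                 = (\<lambda>x. \<Sum>j\<le>(n - 1) div 2.
                        (-1) ^ ((n - 1) div 2 - j) * real ((n + 1) div 2 choose j)
                          * (T ^^ ((n - 1) div 2 - j)) p x))"
  proof (intro ballI)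
    fix p assume p: "p \<in> polys_upto n"
    have S': "(\<lambda>x. \<Sum>j\<le>n div 2. (-1) ^ j * (D ^^ j) p x) = S p" by (simp add: S_def)
    have o1: "odd n \<Longrightarrow> (n - 1) div 2 = n div 2" by (metis odd_two_times_div_two_nat add_diff_cancel_right' nonzero_mult_div_cancel_left zero_neq_numeral)
    have o2: "odd n \<Longrightarrow> (n + 1) div 2 = n div 2 + 1" by presburger
    show "let Tinv = the_inv_into (polys_upto n) T;
             pj = (\<lambda>j. ((\<lambda>f. (\<lambda>x. T f x - f x)) ^^ j) p)
         in (even n \<longrightarrow>
               Tinv p = (\<lambda>x. \<Sum>j\<le>n div 2. (-1) ^ j * pj j x)
             \<and> (\<lambda>x. \<Sum>j\<le>n div 2. (-1) ^ j * pj j x)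
                 = (\<lambda>x. \<Sum>j\<le>n div 2. \<Sum>k\<le>j.
                        (-1) ^ (j + k) * real (j choose k) * (T ^^ (j - k)) p x)
             \<and> (\<lambda>x. \<Sum>j\<le>n div 2. \<Sum>k\<le>j.
                        (-1) ^ (j + k) * real (j choose k) * (T ^^ (j - k)) p x)
                 = (\<lambda>x. \<Sum>j\<le>n div 2.
                        (-1) ^ (n div 2 - j) * real ((n div 2 + 1) choose j)
                          * (T ^^ (n div 2 - j)) p x))
          \<and> (odd n \<longrightarrow>
               Tinv p = (\<lambda>x. \<Sum>j\<le>(n - 1) div 2. (-1) ^ j * pj j x)
             \<and> (\<lambda>x. \<Sum>j\<le>(n - 1) div 2. (-1) ^ j * pj j x)
                 = (\<lambda>x. \<Sum>j\<le>(n - 1) div 2.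
                        (-1) ^ ((n - 1) div 2 - j) * real ((n + 1) div 2 choose j)
                          * (T ^^ ((n - 1) div 2 - j)) p x))"
      unfolding Let_def Deq S'
    proof (intro conjI impI)
      show "the_inv_into (polys_upto n) T p = S p" by (rule inv[OF p])
      show "S p = (\<lambda>x. \<Sum>j\<le>n div 2. \<Sum>k\<le>j. (-1) ^ (j + k) * real (j choose k) * (T ^^ (j - k)) p x)"
        by (rule eB[OF p])
      show "(\<lambda>x. \<Sum>j\<le>n div 2. \<Sum>k\<le>j. (-1) ^ (j + k) * real (j choose k) * (T ^^ (j - k)) p x)
      = (\<lambda>x. \<Sum>j\<le>n div 2. (-1) ^ (n div 2 - j) * real ((n div 2 + 1) choose j) * (T ^^ (n div 2 - j)) p x)"
        by (rule eC)
    next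
      assume odd: "odd n"
      show "the_inv_into (polys_upto n) T p = (\<lambda>x. \<Sum>j\<le>(n - 1) div 2. (- 1) ^ j * (D ^^ j) p x)"
        unfolding o1[OF odd] S' by (rule inv[OF p])
      show "(\<lambda>x. \<Sum>j\<le>(n - 1) div 2. (- 1) ^ j * (D ^^ j) p x) =
        (\<lambda>x. \<Sum>j\<le>(n - 1) div 2. (- 1) ^ ((n - 1) div 2 - j) * real ((n + 1) div 2 choose j) * (T ^^ ((n - 1) div 2 - j)) p x)"
        unfolding o1[OF odd] o2[OF odd] S' eB[OF p] by (rule eC)
    qed
  qed
  show ?thesis using lin bij main by blast
qed

end
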